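(* Let $n>1$ be an integer and $M := \langle x,y \mid (xy,\, y^nx)\rangle$. (1) $M$ is cancellative. (2) For all $k\in\mathbb{N}$, $x^ky =_M y^{n^k}x^k$. (3) For all $k\in\mathbb{N}^+$, $\rho_k(M) = n^{k-1}+k-1$. (4) The differences $\rho_k(M)-\rho_{k-1}(M)$ (for $k\ge 2$) are finite but unbounded.
   Context: $M$ is the monoid generated by $x,y$ subject to the single relation $xy = y^n x$; $\langle x,y\rangle$ is the free monoid on $x,y$. $|a|$ is word length; $a=_M b$ means equal images in $M$. $\mathsf{L}_M(a):=\{|b| : b\in\langle x,y\rangle,\ b=_M a\}$, $\mathcal{L}(M):=\{\mathsf{L}_M(a): a\in\langle x,y\rangle\}$. For $k\in\mathbb{N}$, $\mathcal{U}_k(M):=\bigcup\{L\in\mathcal{L}(M): k\in L\}$ and $\rho_k(M):=\sup\mathcal{U}_k(M)$. Cancellative: $ab=ac$ or $ba=ca$ implies $b=c$. *)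

theory Defs
  imports Main "HOL-Library.Extended_Nat"
begin

datatype letter = X | Y

inductive rel_step :: "nat \<Rightarrow> letter list \<Rightarrow> letter list \<Rightarrow> bool" for n where
  "rel_step n (u @ [X, Y] @ v) (u @ replicate n Y @ [X] @ v)"

text \<open>Equality in M = <x,y | xy = y^n x>: the congruence generated by the relation,
  i.e. the reflexive-symmetric-transitive closure of one-step rewriting.\<close>
definition eqM :: "nat \<Rightarrow> letter list \<Rightarrow> letter list \<Rightarrow> bool" where
  "eqM n a b \<longleftrightarrow> (\<lambda>s t. rel_step n s t \<or> rel_step n t s)\<^sup>*\<^sup>* a b"

definition cancellative_M :: "nat \<Rightarrow> bool" where
  "cancellative_M n \<longleftrightarrow>
     (\<forall>a b c. (eqM n (a @ b) (a @ c) \<longrightarrow> eqM n b c) \<and> (eqM n (b @ a) (c @ a) \<longrightarrow> eqM n b c))"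

definition lengths_M :: "nat \<Rightarrow> letter list \<Rightarrow> nat set" where
  "lengths_M n a = {length b | b. eqM n b a}"

definition length_sets_M :: "nat \<Rightarrow> nat set set" where
  "length_sets_M n = {lengths_M n a | a. True}"

definition U_M :: "nat \<Rightarrow> nat \<Rightarrow> nat set" where
  "U_M n k = \<Union>{L \<in> length_sets_M n. k \<in> L}"

definition rho_M :: "nat \<Rightarrow> nat \<Rightarrow> enat" where
  "rho_M n k = Sup (enat ` U_M n k)"

end

theory Submission
  imports Defs
begin

fun cntX :: "letter list \<Rightarrow> nat" where
  "cntX [] = 0" | "cntX (X # w) = Suc (cntX w)" | "cntX (Y # w) = cntX w"

fun cntY :: "letter list \<Rightarrow> nat" where
  "cntY [] = 0" | "cntY (X # w) = cntY w" | "cntY (Y # w) = Suc (cntY w)"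

fun valw :: "nat \<Rightarrow> letter list \<Rightarrow> nat" where
  "valw n [] = 0" | "valw n (X # w) = n * valw n w" | "valw n (Y # w) = Suc (valw n w)"

lemma cntX_app[simp]: "cntX (u @ v) = cntX u + cntX v"
  by (induction u rule: cntX.induct) auto

lemma cntY_app[simp]: "cntY (u @ v) = cntY u + cntY v"
  by (induction u rule: cntY.induct) auto

lemma valw_app: "valw n (u @ v) = valw n u + n ^ cntX u * valw n v"
  by (induction u rule: cntX.induct) (auto simp: algebra_simps)

lemma cntX_rep[simp]: "cntX (replicate k X) = k" "cntX (replicate k Y) = 0"
  by (induction k) auto

lemma cntY_rep[simp]: "cntY (replicate k X) = 0" "cntY (replicate k Y) = k"
  by (induction k) auto

lemma valw_rep[simp]: "valw n (replicate k X) = 0" "valw n (replicate k Y) = k"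
  by (induction k) auto

lemma len_cnt: "length w = cntX w + cntY w"
  by (induction w rule: cntX.induct) auto

lemma step_inv: "rel_step n a b \<Longrightarrow> cntX a = cntX b \<and> valw n a = valw n b"
  by (induction rule: rel_step.induct) (auto simp: valw_app)

lemma eqM_inv: "eqM n a b \<Longrightarrow> cntX a = cntX b \<and> valw n a = valw n b"
  unfolding eqM_def
  by (induction rule: rtranclp_induct) (auto dest: step_inv)

lemma eqM_refl: "eqM n a a" unfolding eqM_def by simp

lemma eqM_trans: "eqM n a b \<Longrightarrow> eqM n b c \<Longrightarrow> eqM n a c"
  unfolding eqM_def by (rule rtranclp_trans)

lemma eqM_sym: "eqM n a b \<Longrightarrow> eqM n b a"
  unfolding eqM_def
proof (induction rule: rtranclp_induct)
  case base then show ?case by simp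
next
  case (step y z)
  then have "rel_step n z y \<or> rel_step n y z" by blast
  then show ?case using step(3) by (rule converse_rtranclp_into_rtranclp[where r="\<lambda>s t. rel_step n s t \<or> rel_step n t s"])
qed

lemma step_ctx: "rel_step n a b \<Longrightarrow> rel_step n (u @ a @ v) (u @ b @ v)"
proof (induction rule: rel_step.induct)
  case (1 p q)
  then show ?case using rel_step.intros[of n "u @ p" "q @ v"] by simp
qed

lemma eqM_ctx: "eqM n a b \<Longrightarrow> eqM n (u @ a @ v) (u @ b @ v)"
  unfolding eqM_def
proof (induction rule: rtranclp_induct)
  case base then show ?case by simp
next
  case (step y z)
  then have "rel_step n (u @ y @ v) (u @ z @ v) \<or> rel_step n (u @ z @ v) (u @ y @ v)"
    using step_ctx by blast
  with step(3) show ?case by (rule rtranclp.rtrancl_into_rtrancl[where r="\<lambda>s t. rel_step n s t \<or> rel_step n t s"])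
qed

lemma xy_swap: "eqM n (X # replicate a Y) (replicate (n * a) Y @ [X])"
proof (induction a)
  case 0 then show ?case by (simp add: eqM_refl)
next
  case (Suc a)
  have s: "rel_step n ([] @ [X, Y] @ replicate a Y) ([] @ replicate n Y @ [X] @ replicate a Y)"
    by (rule rel_step.intros)
  have 1: "eqM n (X # replicate (Suc a) Y) (replicate n Y @ X # replicate a Y)"
    using s unfolding eqM_def by (auto intro: r_into_rtranclp)
  have 2: "eqM n (replicate n Y @ X # replicate a Y) (replicate n Y @ (replicate (n * a) Y @ [X]) @ [])"
    using eqM_ctx[OF Suc, of "replicate n Y" "[]"] by simp
  have "replicate n Y @ (replicate (n * a) Y @ [X]) @ [] = replicate (n * Suc a) Y @ [X]"
    by (simp add: replicate_add[symmetric])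
  with 1 2 show ?case using eqM_trans by metis
qed

lemma normal: "eqM n w (replicate (valw n w) Y @ replicate (cntX w) X)"
proof (induction w rule: cntX.induct)
  case 1 then show ?case by (simp add: eqM_refl)
next
  case (2 w)
  have a: "eqM n (X # w) ([X] @ (replicate (valw n w) Y @ replicate (cntX w) X) @ [])"
    using eqM_ctx[OF 2, of "[X]" "[]"] by simp
  have b: "eqM n ([] @ (X # replicate (valw n w) Y) @ replicate (cntX w) X)
     ([] @ (replicate (n * valw n w) Y @ [X]) @ replicate (cntX w) X)"
    by (rule eqM_ctx[OF xy_swap])
  from a b show ?case using eqM_trans by (simp add: replicate_app_Cons_same)
next
  case (3 w)
  then show ?case using eqM_ctx[OF 3, of "[Y]" "[]"] by simp
qed

lemma eqM_iff: "eqM n a b \<longleftrightarrow> cntX a = cntX b \<and> valw n a = valw n b"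
  by (metis eqM_inv normal eqM_sym eqM_trans)

lemma cntY_le: "n \<ge> 1 \<Longrightarrow> cntY w \<le> valw n w"
proof (induction w rule: cntX.induct)
  case (2 w)
  then have "valw n w \<le> n * valw n w" by simp
  with 2 have "cntY w \<le> n * valw n w" by linarith
  then show ?case by simp
qed auto

lemma val_bound: "n \<ge> 1 \<Longrightarrow> valw n w \<le> (length w - cntX w) * n ^ cntX w"
proof (induction w rule: cntX.induct)
  case (2 w)
  then show ?case by (simp add: mult.left_commute)
next
  case (3 w)
  have "cntX w \<le> length w" by (simp add: len_cnt)
  moreover have h: "n ^ cntX w \<ge> 1" using 3 by simp
  moreover have "valw n w \<le> (length w - cntX w) * n ^ cntX w" using 3 by simp
  ultimately have "Suc (valw n w) \<le> n ^ cntX w + (length w - cntX w) * n ^ cntX w" by linarith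
  then show ?case using \<open>cntX w \<le> length w\<close> by (simp add: Suc_diff_le)
qed auto

lemma j_le: "n \<ge> 2 \<Longrightarrow> j \<le> n ^ (j - 1)"
proof (induction j)
  case 0 then show ?case by simp
next
  case (Suc m)
  show ?case
  proof (cases m)
    case 0 then show ?thesis by simp
  next
    case (Suc p)
    have "n ^ (Suc m - 1) = n * n ^ (m - 1)" using Suc by simp
    moreover have "Suc m \<le> 2 * n ^ (m - 1)" using Suc.IH[OF Suc.prems] Suc
      by (simp add: Suc_leI)
    moreover have "2 * n ^ (m - 1) \<le> n * n ^ (m - 1)" using Suc.prems by simp
    ultimately show ?thesis by linarith
  qed
qed

lemma arith_bound:
  assumes "n \<ge> 2" "b \<le> k" "k \<ge> 1"
  shows "b + (k - b) * n ^ b \<le> n ^ (k - 1) + k - 1"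
proof (cases "b = k")
  case True
  have "n ^ (k - 1) \<ge> 1" using assms by simp
  with True show ?thesis by simp
next
  case False
  define j where "j = k - b"
  have j1: "j \<ge> 1" using False assms j_def by simp
  have "j \<le> n ^ (j - 1)" using j_le[OF assms(1)] .
  then have "j * n ^ b \<le> n ^ (j - 1) * n ^ b" by simp
  also have "\<dots> = n ^ (k - 1)" using j1 assms j_def by (simp add: power_add[symmetric])
  finally show ?thesis using j_def assms False by simp
qed

lemma word_bound:
  assumes "n \<ge> 2" "length c = k" "k \<ge> 1" "eqM n b c"
  shows "length b \<le> n ^ (k - 1) + k - 1"
proof -
  have "length b = cntX b + cntY b" by (rule len_cnt)
  also have "\<dots> \<le> cntX b + valw n b" using cntY_le[of n b] assms by simp
  also have "\<dots> = cntX c + valw n c" using eqM_inv[OF assms(4)] by simp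
  also have "\<dots> \<le> cntX c + (k - cntX c) * n ^ cntX c" using val_bound[of n c] assms by simp
  also have "\<dots> \<le> n ^ (k - 1) + k - 1"
    using arith_bound[OF assms(1) _ assms(3)] assms(2) len_cnt[of c] by simp
  finally show ?thesis .
qed

lemma part2: "eqM n (replicate k X @ [Y]) (replicate (n ^ k) Y @ replicate k X)"
  unfolding eqM_iff by (simp add: valw_app)

lemma U_char: "U_M n k = {length b | b c. length c = k \<and> eqM n b c}"
  unfolding U_M_def length_sets_M_def lengths_M_def
proof (intro set_eqI iffI)
  fix x assume "x \<in> \<Union>{L \<in> {{length b |b. eqM n b a} |a. True}. k \<in> L}"
  then obtain a where "k \<in> {length b |b. eqM n b a}" "x \<in> {length b |b. eqM n b a}" by blast
  then obtain b c where "length c = k" "eqM n c a" "x = length b" "eqM n b a" by blast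
  then show "x \<in> {length b | b c. length c = k \<and> eqM n b c}"
    using eqM_sym eqM_trans by blast
next
  fix x assume "x \<in> {length b | b c. length c = k \<and> eqM n b c}"
  then obtain b c where "length c = k" "x = length b" "eqM n b c" by blast
  then have "k \<in> {length b |b. eqM n b c}" "x \<in> {length b |b. eqM n b c}"
    using eqM_refl by blast+
  then show "x \<in> \<Union>{L \<in> {{length b |b. eqM n b a} |a. True}. k \<in> L}" by blast
qed

lemma rho_val:
  assumes "n \<ge> 2" "k \<ge> 1"
  shows "rho_M n k = enat (n ^ (k - 1) + k - 1)"
proof -
  let ?m = "n ^ (k - 1) + k - 1"
  let ?b = "replicate (n ^ (k - 1)) Y @ replicate (k - 1) X"
  let ?c = "replicate (k - 1) X @ [Y]"
  have mem: "?m \<in> U_M n k"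
    unfolding U_char
  proof (intro CollectI exI conjI)
    show "length ?c = k" using assms by simp
    show "?m = length ?b" using assms by simp
    show "eqM n ?b ?c" by (rule eqM_sym[OF part2])
  qed
  have ub: "u \<le> ?m" if "u \<in> U_M n k" for u
    using that unfolding U_char using word_bound[OF assms(1) _ assms(2)] by blast
  show ?thesis unfolding rho_M_def
  proof (rule Sup_eqI)
    show "y \<le> enat ?m" if "y \<in> enat ` U_M n k" for y using that ub by auto
    show "enat ?m \<le> y" if "\<And>z. z \<in> enat ` U_M n k \<Longrightarrow> z \<le> y" for y
      using that mem by blast
  qed
qed

lemma B_less: "n \<ge> 2 \<Longrightarrow> B < n ^ B"
proof -
  assume "n \<ge> 2"
  have "B < 2 ^ B" by (rule less_exp)
  also have "(2::nat) ^ B \<le> n ^ B" using \<open>n \<ge> 2\<close> by (simp add: power_mono)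
  finally show ?thesis .
qed

theorem lemma6p4:
  fixes n :: nat
  assumes "n > 1"
  shows "cancellative_M n
    \<and> (\<forall>k::nat. eqM n (replicate k X @ [Y]) (replicate (n ^ k) Y @ replicate k X))
    \<and> (\<forall>k::nat. k \<ge> 1 \<longrightarrow> rho_M n k = enat (n ^ (k - 1) + k - 1))
    \<and> (\<forall>k::nat. k \<ge> 2 \<longrightarrow> rho_M n k \<noteq> \<infinity> \<and> rho_M n (k - 1) \<noteq> \<infinity>)
    \<and> (\<forall>B::nat. \<exists>k::nat. k \<ge> 2 \<and> rho_M n k - rho_M n (k - 1) > enat B)"
proof (intro conjI allI impI)
  have n2: "n \<ge> 2" using assms by simp
  show "cancellative_M n"
    unfolding cancellative_M_def eqM_iff using assms by (auto simp: valw_app)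
  show "eqM n (replicate k X @ [Y]) (replicate (n ^ k) Y @ replicate k X)" for k
    by (rule part2)
  show "rho_M n k = enat (n ^ (k - 1) + k - 1)" if "k \<ge> 1" for k
    using rho_val[OF n2 that] .
  show "rho_M n k \<noteq> \<infinity>" if "k \<ge> 2" for k
    using rho_val[OF n2, of k] that by simp
  show "rho_M n (k - 1) \<noteq> \<infinity>" if "k \<ge> 2" for k
    using rho_val[OF n2, of "k - 1"] that by simp
  fix B :: nat
  show "\<exists>k. k \<ge> 2 \<and> rho_M n k - rho_M n (k - 1) > enat B"
  proof (intro exI conjI)
    show "B + 2 \<ge> 2" by simp
    have r1: "rho_M n (B + 2) = enat (n ^ (B + 1) + B + 1)" using rho_val[OF n2, of "B + 2"] by simp
    have r2: "rho_M n (B + 2 - 1) = enat (n ^ B + B)" using rho_val[OF n2, of "B + 1"] by simp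
    have "n ^ (B + 1) = n * n ^ B" by simp
    moreover have "2 * n ^ B \<le> n * n ^ B" using n2 by simp
    moreover have "B < n ^ B" using B_less[OF n2] .
    ultimately have "B < n ^ (B + 1) + B + 1 - (n ^ B + B)" by linarith
    then show "rho_M n (B + 2) - rho_M n (B + 2 - 1) > enat B" unfolding r1 r2 by simp
  qed
qed

end
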